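(* Let $\mathcal{M}=(S,A,\delta)$ be a finite fuzzy transition system and let $\gamma=1$. Define $d_0=\bot$ (where $\bot(s,t)=0$ for all $s,t\in S$) and $d_{n+1}=\Delta(d_n)$. Then the number of iterations until $d_n=d_{n+1}$ holds for the first time is bounded by a polynomial in the size $|\mathcal{M}|$.
   Context: A fuzzy set on a finite set $X$ is a map $\mu:X\to[0,1]$; $\mathcal{F}(X)$ is the set of fuzzy sets on $X$; $\mu(U)=\max_{x\in U}\mu(x)$; $\mathsf{Supp}(\mu)=\{x\mid\mu(x)>0\}$. A fuzzy transition system is $\mathcal{M}=(S,A,\delta)$ with $S,A$ finite and $\delta:S\times A\to\mathcal{P}(\mathcal{F}(S))$, each $\delta(s,a)$ finite. Its size is $|\mathcal{M}|=|S|+\sum_{s\in S,a\in A,\mu\in\delta(s,a)}|\mathsf{Supp}(\mu)|$. $\mathcal{D}(S)$ is the set of pseudo-ultrametrics $d:S\times S\to[0,1]$, ordered pointwise. Lifting: $\hat d(\mu,\eta)=1$ if $\mu(S)\ne\eta(S)$, and otherwise $\hat d(\mu,\eta)$ is the minimum of $\max_{u,v}\min(d(u,v),x_{uv})$ over $x_{uv}\ge0$ with $\max_v x_{uv}=\mu(u)$ for all $u$ and $\max_u x_{uv}=\eta(v)$ for all $v$. For finite $Z\subseteq\mathcal{F}(S)$: $\hat d(\mu,Z)=\min_{\eta\in Z}\hat d(\mu,\eta)$ if $Z\ne\emptyset$, else $1$. Hausdorff distance: $H_{\hat d}(\emptyset,\emptyset)=0$, otherwise $H_{\hat d}(Y,Z)=\max(\max_{\mu\in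 Y}\hat d(\mu,Z),\max_{\eta\in Z}\hat d(\eta,Y))$. With discounting factor $\gamma\in(0,1]$, $\Delta(d)(s,t)=\gamma\cdot\max_{a\in A}H_{\hat d}(\delta(s,a),\delta(t,a))$. *)

theory Defs
  imports Complex_Main
begin

type_synonym fuzzy = "nat \<Rightarrow> real"
type_synonym dist = "nat \<Rightarrow> nat \<Rightarrow> real"

definition fuzzy_set_on :: "nat set \<Rightarrow> fuzzy \<Rightarrow> bool" where
  "fuzzy_set_on S \<mu> \<longleftrightarrow> (\<forall>x. 0 \<le> \<mu> x \<and> \<mu> x \<le> 1) \<and> (\<forall>x. x \<notin> S \<longrightarrow> \<mu> x = 0)"

definition fts :: "nat set \<Rightarrow> nat set \<Rightarrow> (nat \<Rightarrow> nat \<Rightarrow> fuzzy set) \<Rightarrow> bool" where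
  "fts S A \<delta> \<longleftrightarrow> finite S \<and> finite A \<and>
     (\<forall>s\<in>S. \<forall>a\<in>A. finite (\<delta> s a) \<and> (\<forall>\<mu>\<in>\<delta> s a. fuzzy_set_on S \<mu>))"

definition supp :: "nat set \<Rightarrow> fuzzy \<Rightarrow> nat set" where
  "supp S \<mu> = {x\<in>S. \<mu> x > 0}"

definition fts_size :: "nat set \<Rightarrow> nat set \<Rightarrow> (nat \<Rightarrow> nat \<Rightarrow> fuzzy set) \<Rightarrow> nat" where
  "fts_size S A \<delta> = card S + (\<Sum>s\<in>S. \<Sum>a\<in>A. \<Sum>\<mu>\<in>\<delta> s a. card (supp S \<mu>))"

text \<open>mu(U) = max over U of mu (values are nonnegative, so inserting 0 only matters for U empty).\<close>
definition fmax :: "nat set \<Rightarrow> fuzzy \<Rightarrow> real" where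
  "fmax U \<mu> = Max (insert 0 (\<mu> ` U))"

definition coupling :: "nat set \<Rightarrow> fuzzy \<Rightarrow> fuzzy \<Rightarrow> (nat \<Rightarrow> nat \<Rightarrow> real) \<Rightarrow> bool" where
  "coupling S \<mu> \<eta> x \<longleftrightarrow> (\<forall>u\<in>S. \<forall>v\<in>S. 0 \<le> x u v)
     \<and> (\<forall>u\<in>S. Max ((\<lambda>v. x u v) ` S) = \<mu> u)
     \<and> (\<forall>v\<in>S. Max ((\<lambda>u. x u v) ` S) = \<eta> v)"

text \<open>Lifting of d to fuzzy sets (the minimum over couplings, written as an infimum;
  the minimum is attained).\<close>
definition lift :: "nat set \<Rightarrow> dist \<Rightarrow> fuzzy \<Rightarrow> fuzzy \<Rightarrow> real" where
  "lift S d \<mu> \<eta> = (if fmax S \<mu> \<noteq> fmax S \<eta> then 1 else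
     Inf {Max ((\<lambda>(u,v). min (d u v) (x u v)) ` (S \<times> S)) | x. coupling S \<mu> \<eta> x})"

definition lift_set :: "nat set \<Rightarrow> dist \<Rightarrow> fuzzy \<Rightarrow> fuzzy set \<Rightarrow> real" where
  "lift_set S d \<mu> Z = (if Z = {} then 1 else Min ((\<lambda>\<eta>. lift S d \<mu> \<eta>) ` Z))"

definition hausdorff :: "nat set \<Rightarrow> dist \<Rightarrow> fuzzy set \<Rightarrow> fuzzy set \<Rightarrow> real" where
  "hausdorff S d Y Z = (if Y = {} \<and> Z = {} then 0 else
     max (Max (insert 0 ((\<lambda>\<mu>. lift_set S d \<mu> Z) ` Y)))
         (Max (insert 0 ((\<lambda>\<eta>. lift_set S d \<eta> Y) ` Z))))"

definition Delta :: "real \<Rightarrow> nat set \<Rightarrow> nat set \<Rightarrow> (nat \<Rightarrow> nat \<Rightarrow> fuzzy set) \<Rightarrow> dist \<Rightarrow> dist" where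
  "Delta \<gamma> S A \<delta> d = (\<lambda>s t. if s \<in> S \<and> t \<in> S then
     \<gamma> * Max (insert 0 ((\<lambda>a. hausdorff S d (\<delta> s a) (\<delta> t a)) ` A)) else 0)"

definition bot_dist :: dist where "bot_dist = (\<lambda>s t. 0)"

definition iter_dist :: "real \<Rightarrow> nat set \<Rightarrow> nat set \<Rightarrow> (nat \<Rightarrow> nat \<Rightarrow> fuzzy set) \<Rightarrow> nat \<Rightarrow> dist" where
  "iter_dist \<gamma> S A \<delta> n = (Delta \<gamma> S A \<delta> ^^ n) bot_dist"

end

theory Submission
  imports Defs
begin


definition cw :: "nat set \<Rightarrow> dist \<Rightarrow> (nat \<Rightarrow> nat \<Rightarrow> real) \<Rightarrow> real" where
  "cw S d x = Max ((\<lambda>(u,v). min (d u v) (x u v)) ` (S \<times> S))"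

lemma Max_img_mono:
  fixes f g :: "'a \<Rightarrow> real"
  assumes "finite A" "A \<noteq> {}" "\<And>a. a \<in> A \<Longrightarrow> f a \<le> g a"
  shows "Max (f ` A) \<le> Max (g ` A)"
proof -
  have "Max (f ` A) \<in> f ` A" using assms by (intro Max_in) auto
  then obtain a where a: "a \<in> A" "Max (f ` A) = f a" by auto
  have "g a \<le> Max (g ` A)" using assms a by (intro Max_ge) auto
  then show ?thesis using a assms(3)[of a] by linarith
qed

lemma Min_img_mono:
  fixes f g :: "'a \<Rightarrow> real"
  assumes "finite A" "A \<noteq> {}" "\<And>a. a \<in> A \<Longrightarrow> f a \<le> g a"
  shows "Min (f ` A) \<le> Min (g ` A)"
proof -
  have "Min (g ` A) \<in> g ` A" using assms by (intro Min_in) auto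
  then obtain a where a: "a \<in> A" "Min (g ` A) = g a" by auto
  have "Min (f ` A) \<le> f a" using assms a by (intro Min_le) auto
  then show ?thesis using a assms(3)[of a] by linarith
qed

lemma Max_ins0_mono:
  fixes f g :: "'a \<Rightarrow> real"
  assumes "finite A" "\<And>a. a \<in> A \<Longrightarrow> f a \<le> g a"
  shows "Max (insert 0 (f ` A)) \<le> Max (insert 0 (g ` A))"
proof -
  have "Max (insert 0 (f ` A)) \<in> insert 0 (f ` A)" using assms by (intro Max_in) auto
  then consider "Max (insert 0 (f ` A)) = 0" | a where "a \<in> A" "Max (insert 0 (f ` A)) = f a" by auto
  then show ?thesis
  proof cases
    case 1
    have "0 \<le> Max (insert 0 (g ` A))" using assms by (intro Max_ge) auto
    then show ?thesis using 1 by simp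
  next
    case 2
    have "g a \<le> Max (insert 0 (g ` A))" using assms 2 by (intro Max_ge) auto
    then show ?thesis using 2 assms(2)[of a] by linarith
  qed
qed

lemma Max_ins0_in:
  fixes f :: "'a \<Rightarrow> real"
  assumes "finite A"
  shows "Max (insert 0 (f ` A)) \<in> insert 0 (f ` A)"
  using assms by (intro Max_in) auto

lemma improve:
  assumes fin: "finite S" and ne: "S \<noteq> {}" and cx: "coupling S \<mu> \<eta> x"
  shows "\<exists>x'. coupling S \<mu> \<eta> x' \<and> cw S d x' \<le> cw S d x \<and>
           cw S d x' \<in> (case_prod d) ` (S \<times> S) \<union> insert 0 (\<mu> ` S \<union> \<eta> ` S)"
proof -
  define C where "C = insert (0::real) (\<mu> ` S \<union> \<eta> ` S)"
  have finC: "finite C" using fin by (simp add: C_def)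
  define g where "g t = Max {c\<in>C. c \<le> t}" for t
  have g1: "g t \<in> C \<and> g t \<le> t \<and> 0 \<le> g t" if "0 \<le> t" for t
  proof -
    have f: "finite {c\<in>C. c \<le> t}" using finC by simp
    have n: "0 \<in> {c\<in>C. c \<le> t}" using that by (simp add: C_def)
    have "g t \<in> {c\<in>C. c \<le> t}" unfolding g_def using f n by (intro Max_in) auto
    moreover have "0 \<le> g t" unfolding g_def using f n by (intro Max_ge) auto
    ultimately show ?thesis by auto
  qed
  have g2: "g c = c" if "c \<in> C" for c
    unfolding g_def using finC that by (intro Max_eqI) auto
  have x0: "0 \<le> x u v" if "u \<in> S" "v \<in> S" for u v using cx that by (simp add: coupling_def)
  have xmu: "x u v \<le> \<mu> u" if "u \<in> S" "v \<in> S" for u v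
  proof -
    have "x u v \<le> Max ((\<lambda>v. x u v) ` S)" using fin that by (intro Max_ge) auto
    then show ?thesis using cx that by (simp add: coupling_def)
  qed
  have xeta: "x u v \<le> \<eta> v" if "u \<in> S" "v \<in> S" for u v
  proof -
    have "x u v \<le> Max ((\<lambda>u. x u v) ` S)" using fin that by (intro Max_ge) auto
    then show ?thesis using cx that by (simp add: coupling_def)
  qed
  have rowatt: "\<exists>v\<in>S. x u v = \<mu> u" if "u \<in> S" for u
  proof -
    have "Max ((\<lambda>v. x u v) ` S) \<in> (\<lambda>v. x u v) ` S" using fin ne by (intro Max_in) auto
    then show ?thesis using cx that by (auto simp add: coupling_def)
  qed
  have colatt: "\<exists>u\<in>S. x u v = \<eta> v" if "v \<in> S" for v
  proof -
    have "Max ((\<lambda>u. x u v) ` S) \<in> (\<lambda>u. x u v) ` S" using fin ne by (intro Max_in) auto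
    then show ?thesis using cx that by (auto simp add: coupling_def)
  qed
  define x' where "x' u v = (if d u v \<le> x u v then min (\<mu> u) (\<eta> v) else g (x u v))" for u v
  have x'C: "x' u v \<in> C \<and> 0 \<le> x' u v \<and> x' u v \<le> \<mu> u \<and> x' u v \<le> \<eta> v" if "u \<in> S" "v \<in> S" for u v
  proof (cases "d u v \<le> x u v")
    case True
    then show ?thesis using that x0[OF that] xmu[OF that] xeta[OF that]
      by (auto simp: x'_def C_def min_def)
  next
    case False
    then show ?thesis using that x0[OF that] xmu[OF that] xeta[OF that] g1[of "x u v"]
      by (auto simp: x'_def)
  qed
  have row: "Max ((\<lambda>v. x' u v) ` S) = \<mu> u" if u: "u \<in> S" for u
  proof -
    obtain v where v: "v \<in> S" "x u v = \<mu> u" using rowatt[OF u] by auto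
    have "x' u v = \<mu> u"
    proof (cases "d u v \<le> x u v")
      case True then show ?thesis using v xeta[OF u v(1)] by (simp add: x'_def min_def)
    next
      case False then show ?thesis using v u by (simp add: x'_def g2 C_def)
    qed
    then have "\<mu> u \<in> (\<lambda>v. x' u v) ` S" using v by (metis image_eqI)
    then show ?thesis using fin x'C u by (intro Max_eqI) auto
  qed
  have col: "Max ((\<lambda>u. x' u v) ` S) = \<eta> v" if v: "v \<in> S" for v
  proof -
    obtain u where u: "u \<in> S" "x u v = \<eta> v" using colatt[OF v] by auto
    have "x' u v = \<eta> v"
    proof (cases "d u v \<le> x u v")
      case True then show ?thesis using u xmu[OF u(1) v] by (simp add: x'_def min_def)
    next
      case False then show ?thesis using v u by (simp add: x'_def g2 C_def)
    qed
    then have "\<eta> v \<in> (\<lambda>u. x' u v) ` S" using u by (metis image_eqI)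
    then show ?thesis using fin x'C v by (intro Max_eqI) auto
  qed
  have cx': "coupling S \<mu> \<eta> x'" using x'C row col by (simp add: coupling_def)
  have le: "cw S d x' \<le> cw S d x"
    unfolding cw_def
  proof (rule Max_img_mono)
    show "finite (S \<times> S)" using fin by simp
    show "S \<times> S \<noteq> {}" using ne by simp
    fix p assume p: "p \<in> S \<times> S"
    obtain u v where uv: "p = (u,v)" "u \<in> S" "v \<in> S" using p by auto
    show "(\<lambda>(u, v). min (d u v) (x' u v)) p \<le> (\<lambda>(u, v). min (d u v) (x u v)) p"
    proof (cases "d u v \<le> x u v")
      case True then show ?thesis using uv by (simp add: x'_def)
    next
      case False then show ?thesis using uv g1[of "x u v"] x0[of u v] by (simp add: x'_def)
    qed
  qed
  have "cw S d x' \<in> (\<lambda>(u,v). min (d u v) (x' u v)) ` (S \<times> S)"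
    unfolding cw_def using fin ne by (intro Max_in) auto
  then obtain u v where uv: "u \<in> S" "v \<in> S" "cw S d x' = min (d u v) (x' u v)" by auto
  have "cw S d x' \<in> (case_prod d) ` (S \<times> S) \<union> C"
    using uv x'C[OF uv(1,2)] by (auto simp: min_def)
  then have "cw S d x' \<in> (case_prod d) ` (S \<times> S) \<union> insert 0 (\<mu> ` S \<union> \<eta> ` S)"
    by (simp add: C_def)
  then show ?thesis using cx' le by blast
qed




lemma fmax_props:
  assumes "finite S" "S \<noteq> {}" "\<forall>x. 0 \<le> \<mu> x"
  shows "\<exists>v\<in>S. \<mu> v = fmax S \<mu>" "\<forall>v\<in>S. \<mu> v \<le> fmax S \<mu>"
proof -
  show le: "\<forall>v\<in>S. \<mu> v \<le> fmax S \<mu>" unfolding fmax_def using assms by (intro ballI Max_ge) auto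
  have "fmax S \<mu> \<in> insert 0 (\<mu> ` S)" unfolding fmax_def using assms by (intro Max_in) auto
  then consider "fmax S \<mu> = 0" | "fmax S \<mu> \<in> \<mu> ` S" by auto
  then show "\<exists>v\<in>S. \<mu> v = fmax S \<mu>"
  proof cases
    case 1
    obtain v where v: "v \<in> S" using assms by auto
    then have "\<mu> v = 0" using le 1 assms(3) by (metis order_antisym)
    then show ?thesis using v 1 by auto
  qed auto
qed

lemma coupling_ex:
  assumes fin: "finite S" and ne: "S \<noteq> {}" and m: "\<forall>x. 0 \<le> \<mu> x" and e: "\<forall>x. 0 \<le> \<eta> x"
    and eq: "fmax S \<mu> = fmax S \<eta>"
  shows "coupling S \<mu> \<eta> (\<lambda>u v. min (\<mu> u) (\<eta> v))"
proof -
  obtain v0 where v0: "v0 \<in> S" "\<eta> v0 = fmax S \<eta>" using fmax_props[OF fin ne e] by auto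
  obtain u0 where u0: "u0 \<in> S" "\<mu> u0 = fmax S \<mu>" using fmax_props[OF fin ne m] by auto
  have lm: "\<mu> u \<le> \<eta> v0" if "u \<in> S" for u using fmax_props(2)[OF fin ne m] that v0 eq by auto
  have le: "\<eta> v \<le> \<mu> u0" if "v \<in> S" for v using fmax_props(2)[OF fin ne e] that u0 eq by auto
  have r: "Max ((\<lambda>v. min (\<mu> u) (\<eta> v)) ` S) = \<mu> u" if "u \<in> S" for u
  proof -
    have "\<mu> u \<in> (\<lambda>v. min (\<mu> u) (\<eta> v)) ` S" using v0 lm[OF that]
      by (metis image_eqI min.absorb1)
    then show ?thesis using fin by (intro Max_eqI) auto
  qed
  have c: "Max ((\<lambda>u. min (\<mu> u) (\<eta> v)) ` S) = \<eta> v" if "v \<in> S" for v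
  proof -
    have "\<eta> v \<in> (\<lambda>u. min (\<mu> u) (\<eta> v)) ` S" using u0 le[OF that]
      by (metis image_eqI min.absorb2)
    then show ?thesis using fin by (intro Max_eqI) auto
  qed
  show ?thesis unfolding coupling_def using r c m e by auto
qed

lemma lift_opt:
  assumes fin: "finite S" and ne: "S \<noteq> {}" and m: "\<forall>x. 0 \<le> \<mu> x" and e: "\<forall>x. 0 \<le> \<eta> x"
    and eq: "fmax S \<mu> = fmax S \<eta>"
  shows "\<exists>x. coupling S \<mu> \<eta> x \<and> lift S d \<mu> \<eta> = cw S d x \<and>
           cw S d x \<in> (case_prod d) ` (S \<times> S) \<union> insert 0 (\<mu> ` S \<union> \<eta> ` S) \<and>
           (\<forall>x'. coupling S \<mu> \<eta> x' \<longrightarrow> cw S d x \<le> cw S d x')"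
proof -
  define Cf where "Cf = (case_prod d) ` (S \<times> S) \<union> insert 0 (\<mu> ` S \<union> \<eta> ` S)"
  define TC where "TC = {t \<in> Cf. \<exists>x. coupling S \<mu> \<eta> x \<and> cw S d x = t}"
  have finTC: "finite TC" using fin by (simp add: TC_def Cf_def)
  obtain x1 where x1: "coupling S \<mu> \<eta> x1" "cw S d x1 \<in> Cf"
    using improve[OF fin ne coupling_ex[OF fin ne m e eq], of d] unfolding Cf_def by blast
  have neTC: "TC \<noteq> {}" using x1 by (auto simp: TC_def)
  have "Min TC \<in> TC" using finTC neTC by (rule Min_in)
  then obtain x where x: "coupling S \<mu> \<eta> x" "cw S d x = Min TC" "cw S d x \<in> Cf"
    by (auto simp: TC_def)
  have opt: "cw S d x \<le> cw S d x'" if cx': "coupling S \<mu> \<eta> x'" for x'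
  proof -
    obtain x'' where x'': "coupling S \<mu> \<eta> x''" "cw S d x'' \<le> cw S d x'" "cw S d x'' \<in> Cf"
      using improve[OF fin ne cx', of d] unfolding Cf_def by blast
    have "cw S d x'' \<in> TC" using x'' by (auto simp: TC_def)
    then have "Min TC \<le> cw S d x''" using finTC by (simp add: Min_le)
    then show ?thesis using x x'' by linarith
  qed
  have "lift S d \<mu> \<eta> = Inf {cw S d x |x. coupling S \<mu> \<eta> x}"
    using eq by (simp add: lift_def cw_def)
  also have "\<dots> = cw S d x"
  proof (rule cInf_eq_minimum)
    show "cw S d x \<in> {cw S d x |x. coupling S \<mu> \<eta> x}" using x(1) by blast
  qed (use opt in auto)
  finally have "lift S d \<mu> \<eta> = cw S d x" .
  moreover have "cw S d x \<in> (case_prod d) ` (S \<times> S) \<union> insert 0 (\<mu> ` S \<union> \<eta> ` S)"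
    using x(3) by (simp add: Cf_def)
  ultimately show ?thesis using x(1) opt by blast
qed

lemma fuzzy_nonneg: "fuzzy_set_on S \<mu> \<Longrightarrow> \<forall>x. 0 \<le> \<mu> x"
  by (simp add: fuzzy_set_on_def)

lemma lift_mono:
  assumes fin: "finite S" and m: "fuzzy_set_on S \<mu>" and e: "fuzzy_set_on S \<eta>"
    and le: "\<forall>u\<in>S. \<forall>v\<in>S. d u v \<le> d' u v"
  shows "lift S d \<mu> \<eta> \<le> lift S d' \<mu> \<eta>"
proof (cases "fmax S \<mu> = fmax S \<eta>")
  case False then show ?thesis by (simp add: lift_def)
next
  case eq: True
  show ?thesis
  proof (cases "S = {}")
    case True then show ?thesis by (simp add: lift_def)
  next
    case ne: False
    note mm = fuzzy_nonneg[OF m] and ee = fuzzy_nonneg[OF e]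
    obtain x' where x': "coupling S \<mu> \<eta> x'" "lift S d' \<mu> \<eta> = cw S d' x'"
      using lift_opt[OF fin ne mm ee eq, of d'] by auto
    obtain x where x: "lift S d \<mu> \<eta> = cw S d x" "\<forall>y. coupling S \<mu> \<eta> y \<longrightarrow> cw S d x \<le> cw S d y"
      using lift_opt[OF fin ne mm ee eq, of d] by auto
    have "cw S d x' \<le> cw S d' x'" unfolding cw_def
    proof (rule Max_img_mono)
      fix p assume "p \<in> S \<times> S"
      then obtain a b where p: "p = (a,b)" "a \<in> S" "b \<in> S" by auto
      then have "d a b \<le> d' a b" using le by auto
      then show "(\<lambda>(u, v). min (d u v) (x' u v)) p \<le> (\<lambda>(u, v). min (d' u v) (x' u v)) p"
        using p by (simp add: min.mono)
    qed (use fin ne in auto)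
    then show ?thesis using x x' by force
  qed
qed

lemma lift_val:
  assumes fin: "finite S" and ne: "S \<noteq> {}" and m: "fuzzy_set_on S \<mu>" and e: "fuzzy_set_on S \<eta>"
  shows "lift S d \<mu> \<eta> \<in> insert 1 ((case_prod d) ` (S \<times> S) \<union> insert 0 (\<mu> ` S \<union> \<eta> ` S))"
proof (cases "fmax S \<mu> = fmax S \<eta>")
  case False then show ?thesis by (simp add: lift_def)
next
  case True
  then show ?thesis using lift_opt[OF fin ne fuzzy_nonneg[OF m] fuzzy_nonneg[OF e] True, of d]
    by auto
qed




definition VV :: "nat set \<Rightarrow> nat set \<Rightarrow> (nat \<Rightarrow> nat \<Rightarrow> fuzzy set) \<Rightarrow> real set" where
  "VV S A \<delta> = {0,1} \<union> (\<Union>s\<in>S. \<Union>a\<in>A. \<Union>\<mu>\<in>\<delta> s a. \<mu> ` supp S \<mu>)"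

definition good :: "nat set \<Rightarrow> real set \<Rightarrow> dist \<Rightarrow> bool" where
  "good S V d \<longleftrightarrow> (\<forall>s t. (s \<in> S \<and> t \<in> S \<longrightarrow> d s t \<in> V) \<and> (\<not> (s \<in> S \<and> t \<in> S) \<longrightarrow> d s t = 0))"

lemma VV_mu:
  assumes "fts S A \<delta>" "s \<in> S" "a \<in> A" "\<mu> \<in> \<delta> s a" "x \<in> S"
  shows "\<mu> x \<in> VV S A \<delta>"
proof -
  have "0 \<le> \<mu> x" using assms by (auto simp: fts_def fuzzy_set_on_def)
  then consider "\<mu> x = 0" | "\<mu> x > 0" by linarith
  then show ?thesis
  proof cases
    case 2
    then have "x \<in> supp S \<mu>" using assms by (simp add: supp_def)
    then show ?thesis unfolding VV_def using assms by blast
  qed (simp add: VV_def)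
qed

lemma VV_nonneg:
  assumes "fts S A \<delta>" "c \<in> VV S A \<delta>" shows "0 \<le> c"
  using assms by (auto simp: VV_def fts_def fuzzy_set_on_def)

lemma VV_finite:
  assumes "fts S A \<delta>" shows "finite (VV S A \<delta>)"
  using assms unfolding VV_def fts_def supp_def by auto

lemma Max_ins0_sub:
  fixes f :: "'a \<Rightarrow> real"
  assumes "finite A" "0 \<in> V" "\<And>a. a \<in> A \<Longrightarrow> f a \<in> V"
  shows "Max (insert 0 (f ` A)) \<in> V"
  using Max_ins0_in[OF assms(1), of f] assms(2,3) by auto

lemma Delta_good:
  assumes f: "fts S A \<delta>" and g: "good S (VV S A \<delta>) d"
  shows "good S (VV S A \<delta>) (Delta 1 S A \<delta> d)"
  unfolding good_def
proof (intro allI conjI impI)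
  fix s t assume st: "s \<in> S \<and> t \<in> S"
  have finS: "finite S" and finA: "finite A" using f by (auto simp: fts_def)
  have ne: "S \<noteq> {}" using st by auto
  let ?V = "VV S A \<delta>"
  have z: "0 \<in> ?V" "1 \<in> ?V" by (auto simp: VV_def)
  have H: "hausdorff S d (\<delta> s a) (\<delta> t a) \<in> ?V" if a: "a \<in> A" for a
  proof -
    have fin1: "finite (\<delta> s a)" "finite (\<delta> t a)" using f st a by (auto simp: fts_def)
    have fz: "fuzzy_set_on S \<mu>" if "\<mu> \<in> \<delta> s a \<union> \<delta> t a" for \<mu> using f st a that by (auto simp: fts_def)
    have inV: "\<mu> x \<in> ?V" if "\<mu> \<in> \<delta> s a \<union> \<delta> t a" "x \<in> S" for \<mu> x
      using VV_mu[OF f _ a _ that(2)] st that(1) by auto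
    have dV: "case_prod d ` (S \<times> S) \<subseteq> ?V" using g by (auto simp: good_def)
    have LS: "lift_set S d \<mu> Z \<in> ?V" if "\<mu> \<in> \<delta> s a \<union> \<delta> t a" "Z = \<delta> s a \<or> Z = \<delta> t a" for \<mu> Z
    proof (cases "Z = {}")
      case True then show ?thesis using z by (simp add: lift_set_def)
    next
      case False
      have finZ: "finite Z" using that fin1 by auto
      have "Min ((\<lambda>\<eta>. lift S d \<mu> \<eta>) ` Z) \<in> (\<lambda>\<eta>. lift S d \<mu> \<eta>) ` Z"
        using finZ False by (intro Min_in) auto
      then obtain \<eta> where \<eta>: "\<eta> \<in> Z" "Min ((\<lambda>\<eta>. lift S d \<mu> \<eta>) ` Z) = lift S d \<mu> \<eta>" by auto
      have e\<eta>: "\<eta> \<in> \<delta> s a \<union> \<delta> t a" using \<eta> that by auto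
      have "lift S d \<mu> \<eta> \<in> insert 1 ((case_prod d) ` (S \<times> S) \<union> insert 0 (\<mu> ` S \<union> \<eta> ` S))"
        by (rule lift_val[OF finS ne fz[OF that(1)] fz[OF e\<eta>]])
      moreover have "\<mu> ` S \<subseteq> ?V" "\<eta> ` S \<subseteq> ?V" using inV[OF that(1)] inV[OF e\<eta>] by auto
      ultimately have "lift S d \<mu> \<eta> \<in> ?V" using z dV by auto
      then show ?thesis using \<eta> False by (simp add: lift_set_def)
    qed
    have M1: "Max (insert 0 ((\<lambda>\<mu>. lift_set S d \<mu> (\<delta> t a)) ` \<delta> s a)) \<in> ?V"
      by (rule Max_ins0_sub[OF fin1(1) z(1)]) (rule LS, auto)
    have M2: "Max (insert 0 ((\<lambda>\<mu>. lift_set S d \<mu> (\<delta> s a)) ` \<delta> t a)) \<in> ?V"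
      by (rule Max_ins0_sub[OF fin1(2) z(1)]) (rule LS, auto)
    show ?thesis unfolding hausdorff_def using M1 M2 z by (simp add: max_def)
  qed
  have "Max (insert 0 ((\<lambda>a. hausdorff S d (\<delta> s a) (\<delta> t a)) ` A)) \<in> ?V"
    by (rule Max_ins0_sub[OF finA z(1)]) (rule H)
  then show "Delta 1 S A \<delta> d s t \<in> ?V" using st by (simp add: Delta_def)
next
  fix s t assume "\<not> (s \<in> S \<and> t \<in> S)"
  then show "Delta 1 S A \<delta> d s t = 0" unfolding Delta_def by auto
qed

lemma Delta_mono:
  assumes f: "fts S A \<delta>" and le: "\<forall>u\<in>S. \<forall>v\<in>S. d u v \<le> d' u v"
  shows "\<forall>u\<in>S. \<forall>v\<in>S. Delta 1 S A \<delta> d u v \<le> Delta 1 S A \<delta> d' u v"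
proof (intro ballI)
  fix s t assume s: "s \<in> S" and t: "t \<in> S"
  have finS: "finite S" and finA: "finite A" using f by (auto simp: fts_def)
  have H: "hausdorff S d (\<delta> s a) (\<delta> t a) \<le> hausdorff S d' (\<delta> s a) (\<delta> t a)" if a: "a \<in> A" for a
  proof -
    have fin1: "finite (\<delta> s a)" "finite (\<delta> t a)" using f s t a by (auto simp: fts_def)
    have fz: "fuzzy_set_on S \<mu>" if "\<mu> \<in> \<delta> s a \<union> \<delta> t a" for \<mu> using f s t a that by (auto simp: fts_def)
    have LS: "lift_set S d \<mu> Z \<le> lift_set S d' \<mu> Z" if "\<mu> \<in> \<delta> s a \<union> \<delta> t a" "Z = \<delta> s a \<or> Z = \<delta> t a" for \<mu> Z
    proof (cases "Z = {}")
      case True then show ?thesis by (simp add: lift_set_def)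
    next
      case False
      have finZ: "finite Z" using that fin1 by auto
      have "Min ((\<lambda>\<eta>. lift S d \<mu> \<eta>) ` Z) \<le> Min ((\<lambda>\<eta>. lift S d' \<mu> \<eta>) ` Z)"
      proof (rule Min_img_mono[OF finZ False])
        fix \<eta> assume "\<eta> \<in> Z"
        then have "\<eta> \<in> \<delta> s a \<union> \<delta> t a" using that by auto
        then show "lift S d \<mu> \<eta> \<le> lift S d' \<mu> \<eta>"
          by (rule lift_mono[OF finS fz[OF that(1)] fz le])
      qed
      then show ?thesis using False by (simp add: lift_set_def)
    qed
    have M1: "Max (insert 0 ((\<lambda>\<mu>. lift_set S d \<mu> (\<delta> t a)) ` \<delta> s a))
        \<le> Max (insert 0 ((\<lambda>\<mu>. lift_set S d' \<mu> (\<delta> t a)) ` \<delta> s a))"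
      by (rule Max_ins0_mono[OF fin1(1)]) (use LS in auto)
    have M2: "Max (insert 0 ((\<lambda>\<mu>. lift_set S d \<mu> (\<delta> s a)) ` \<delta> t a))
        \<le> Max (insert 0 ((\<lambda>\<mu>. lift_set S d' \<mu> (\<delta> s a)) ` \<delta> t a))"
      by (rule Max_ins0_mono[OF fin1(2)]) (use LS in auto)
    show ?thesis
    proof (cases "\<delta> s a = {} \<and> \<delta> t a = {}")
      case True then show ?thesis by (simp add: hausdorff_def)
    next
      case False
      have "max (Max (insert 0 ((\<lambda>\<mu>. lift_set S d \<mu> (\<delta> t a)) ` \<delta> s a)))
                 (Max (insert 0 ((\<lambda>\<mu>. lift_set S d \<mu> (\<delta> s a)) ` \<delta> t a)))
         \<le> max (Max (insert 0 ((\<lambda>\<mu>. lift_set S d' \<mu> (\<delta> t a)) ` \<delta> s a)))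
                 (Max (insert 0 ((\<lambda>\<mu>. lift_set S d' \<mu> (\<delta> s a)) ` \<delta> t a)))"
        by (rule max.mono[OF M1 M2])
      then show ?thesis using False unfolding hausdorff_def by simp
    qed
  qed
  have "Max (insert 0 ((\<lambda>a. hausdorff S d (\<delta> s a) (\<delta> t a)) ` A))
      \<le> Max (insert 0 ((\<lambda>a. hausdorff S d' (\<delta> s a) (\<delta> t a)) ` A))"
    by (rule Max_ins0_mono[OF finA]) (use H in auto)
  then show "Delta 1 S A \<delta> d s t \<le> Delta 1 S A \<delta> d' s t" using s t by (simp add: Delta_def)
qed




definition rk :: "nat set \<Rightarrow> real set \<Rightarrow> dist \<Rightarrow> nat" where
  "rk S V d = (\<Sum>p\<in>S \<times> S. card {c \<in> V. c \<le> d (fst p) (snd p)})"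

lemma rk_strict:
  assumes finS: "finite S" and finV: "finite V" and g: "good S V d" "good S V d'"
    and le: "\<forall>u\<in>S. \<forall>v\<in>S. d u v \<le> d' u v" and ne: "d \<noteq> d'"
  shows "rk S V d < rk S V d'"
proof -
  obtain s t where st: "d s t \<noteq> d' s t" using ne by (metis ext)
  have sS: "s \<in> S \<and> t \<in> S"
  proof (rule ccontr)
    assume "\<not> (s \<in> S \<and> t \<in> S)"
    then show False using g st by (simp add: good_def)
  qed
  have sub: "{c \<in> V. c \<le> d u v} \<subseteq> {c \<in> V. c \<le> d' u v}" if "u \<in> S" "v \<in> S" for u v
    using le that by force
  show ?thesis unfolding rk_def
  proof (rule sum_strict_mono_ex1)
    show "finite (S \<times> S)" using finS by simp
    show "\<forall>p\<in>S \<times> S. card {c \<in> V. c \<le> d (fst p) (snd p)} \<le> card {c \<in> V. c \<le> d' (fst p) (snd p)}"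
      using sub finV by (auto intro!: card_mono)
    have lt: "d s t < d' s t" using st le sS by force
    have dV: "d' s t \<in> V" using g(2) sS by (simp add: good_def)
    have i1: "d' s t \<notin> {c \<in> V. c \<le> d s t}" using lt by auto
    have i2: "d' s t \<in> {c \<in> V. c \<le> d' s t}" using dV by auto
    have "{c \<in> V. c \<le> d s t} \<subset> {c \<in> V. c \<le> d' s t}"
      using sub[of s t] sS i1 i2 by blast
    then have "card {c \<in> V. c \<le> d s t} < card {c \<in> V. c \<le> d' s t}"
      using finV by (intro psubset_card_mono) auto
    then show "\<exists>p\<in>S \<times> S. card {c \<in> V. c \<le> d (fst p) (snd p)} < card {c \<in> V. c \<le> d' (fst p) (snd p)}"
      using sS by force
  qed
qed

lemma rk_bound:
  assumes "finite V"
  shows "rk S V d \<le> card (S \<times> S) * card V"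
  unfolding rk_def
  using sum_bounded_above[of "S \<times> S" "\<lambda>p. card {c \<in> V. c \<le> d (fst p) (snd p)}" "card V"]
    assms by (simp add: card_mono)

lemma iter_Suc: "iter_dist 1 S A \<delta> (Suc n) = Delta 1 S A \<delta> (iter_dist 1 S A \<delta> n)"
  by (simp add: iter_dist_def)

lemma iter_good:
  assumes "fts S A \<delta>" shows "good S (VV S A \<delta>) (iter_dist 1 S A \<delta> n)"
proof (induction n)
  case 0 then show ?case by (simp add: iter_dist_def bot_dist_def good_def VV_def)
next
  case (Suc n) then show ?case using Delta_good[OF assms] by (simp add: iter_Suc)
qed

lemma iter_mono:
  assumes f: "fts S A \<delta>"
  shows "\<forall>u\<in>S. \<forall>v\<in>S. iter_dist 1 S A \<delta> n u v \<le> iter_dist 1 S A \<delta> (Suc n) u v"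
proof (induction n)
  case 0
  have "good S (VV S A \<delta>) (iter_dist 1 S A \<delta> 1)" by (rule iter_good[OF f])
  then show ?case using VV_nonneg[OF f]
    by (simp add: good_def) (simp add: iter_dist_def bot_dist_def)
next
  case (Suc n) then show ?case using Delta_mono[OF f] by (simp only: iter_Suc)
qed

lemma VV_card:
  assumes f: "fts S A \<delta>" shows "card (VV S A \<delta>) \<le> 2 + fts_size S A \<delta>"
proof -
  have finS: "finite S" and finA: "finite A" using f by (auto simp: fts_def)
  have fd: "finite (\<delta> s a)" if "s \<in> S" "a \<in> A" for s a using f that by (auto simp: fts_def)
  let ?U = "\<Union>s\<in>S. \<Union>a\<in>A. \<Union>\<mu>\<in>\<delta> s a. \<mu> ` supp S \<mu>"
  have "card ?U \<le> (\<Sum>s\<in>S. card (\<Union>a\<in>A. \<Union>\<mu>\<in>\<delta> s a. \<mu> ` supp S \<mu>))"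
    by (rule card_UN_le[OF finS])
  also have "\<dots> \<le> (\<Sum>s\<in>S. \<Sum>a\<in>A. card (\<Union>\<mu>\<in>\<delta> s a. \<mu> ` supp S \<mu>))"
    by (rule sum_mono, rule card_UN_le[OF finA])
  also have "\<dots> \<le> (\<Sum>s\<in>S. \<Sum>a\<in>A. \<Sum>\<mu>\<in>\<delta> s a. card (\<mu> ` supp S \<mu>))"
    by (intro sum_mono card_UN_le fd) auto
  also have "\<dots> \<le> (\<Sum>s\<in>S. \<Sum>a\<in>A. \<Sum>\<mu>\<in>\<delta> s a. card (supp S \<mu>))"
    by (intro sum_mono card_image_le) (simp add: supp_def finS)
  finally have "card ?U \<le> fts_size S A \<delta>" by (simp add: fts_size_def)
  moreover have "card (VV S A \<delta>) \<le> card {0::real,1} + card ?U"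
    unfolding VV_def by (rule card_Un_le)
  moreover have "card {0::real,1} = 2" by simp
  ultimately show ?thesis by linarith
qed

theorem proposition3:
  shows "\<exists>c k :: nat. \<forall>S A \<delta>. fts S A \<delta> \<longrightarrow>
     (\<exists>n. iter_dist 1 S A \<delta> n = iter_dist 1 S A \<delta> (Suc n)
        \<and> (\<forall>m<n. iter_dist 1 S A \<delta> m \<noteq> iter_dist 1 S A \<delta> (Suc m))
        \<and> n \<le> c * (fts_size S A \<delta>) ^ k)"
proof (intro exI allI impI)
  fix S A \<delta> assume f: "fts S A \<delta>"
  define D where "D = iter_dist 1 S A \<delta>"
  define V where "V = VV S A \<delta>"
  define B where "B = card (S \<times> S) * card V"
  have finS: "finite S" using f by (simp add: fts_def)
  have finV: "finite V" using VV_finite[OF f] by (simp add: V_def)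
  have gd: "good S V (D n)" for n using iter_good[OF f] by (simp add: D_def V_def)
  have mn: "\<forall>u\<in>S. \<forall>v\<in>S. D n u v \<le> D (Suc n) u v" for n using iter_mono[OF f] by (simp add: D_def)
  have grow: "n \<le> rk S V (D n)" if "\<forall>m<n. D m \<noteq> D (Suc m)" for n
    using that
  proof (induction n)
    case 0 then show ?case by simp
  next
    case (Suc n)
    then have "n \<le> rk S V (D n)" by simp
    moreover have "rk S V (D n) < rk S V (D (Suc n))"
      using rk_strict[OF finS finV gd gd mn] Suc.prems by simp
    ultimately show ?case by simp
  qed
  have ex: "\<exists>n\<le>B. D n = D (Suc n)"
  proof (rule ccontr)
    assume "\<not> ?thesis"
    then have "\<forall>m<Suc B. D m \<noteq> D (Suc m)" by auto
    then have "Suc B \<le> rk S V (D (Suc B))" by (rule grow)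
    moreover have "rk S V (D (Suc B)) \<le> B" using rk_bound[OF finV] by (simp add: B_def)
    ultimately show False by simp
  qed
  define n where "n = (LEAST n. D n = D (Suc n))"
  obtain n0 where n0: "n0 \<le> B" "D n0 = D (Suc n0)" using ex by blast
  have n1: "D n = D (Suc n)" unfolding n_def by (rule LeastI[of _ n0]) (rule n0(2))
  have n2: "\<forall>m<n. D m \<noteq> D (Suc m)"
  proof (intro allI impI)
    fix m assume "m < n"
    then show "D m \<noteq> D (Suc m)" unfolding n_def by (rule not_less_Least)
  qed
  have "n \<le> n0" unfolding n_def by (rule Least_le) (rule n0(2))
  then have nB: "n \<le> B" using n0(1) by linarith
  have B3: "B \<le> 3 * fts_size S A \<delta> ^ 3"
  proof -
    let ?z = "fts_size S A \<delta>"
    have cS: "card S \<le> ?z" by (simp add: fts_size_def)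
    have cV: "card V \<le> 2 + ?z" using VV_card[OF f] by (simp add: V_def)
    show ?thesis
    proof (cases "card S = 0")
      case True then show ?thesis by (simp add: B_def card_cartesian_product)
    next
      case False
      then have "1 \<le> ?z" using cS by linarith
      then have cV3: "card V \<le> 3 * ?z" using cV by linarith
      have "B = card S * card S * card V" by (simp add: B_def card_cartesian_product)
      also have "\<dots> \<le> ?z * ?z * (3 * ?z)" using cS cV3 by (intro mult_le_mono) auto
      also have "\<dots> = 3 * ?z ^ 3" by (simp add: power3_eq_cube)
      finally show ?thesis .
    qed
  qed
  show "iter_dist 1 S A \<delta> n = iter_dist 1 S A \<delta> (Suc n)
        \<and> (\<forall>m<n. iter_dist 1 S A \<delta> m \<noteq> iter_dist 1 S A \<delta> (Suc m))
        \<and> n \<le> 3 * (fts_size S A \<delta>) ^ 3"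
    using n1 n2 nB B3 by (simp add: D_def)
qed


end
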